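(* Let $C_H>0$, $c_H>0$ and $\theta\in(0,1)$, and set $\Theta=\theta\,\frac{1-e^{-c_H}}{1+e^{-c_H}}$. Let $y=(y_j)_{j\in\mathbb N}\in\ell^\infty(\mathbb N)$ have nonnegative entries and satisfy $$\forall j\in\mathbb N,\quad y_j\le C_He^{-c_Hj}+\Theta\sum_{k=0}^{+\infty}e^{-c_H|j-1-k|}y_k.$$ Then $y_j\le\rho r^j$ for all $j\in\mathbb N$, where $$r=\cosh(c_H)-2\sinh\!\left(\tfrac{c_H}{2}\right)\sqrt{\cosh^2\!\left(\tfrac{c_H}{2}\right)-\theta}\in\,]e^{-c_H},1[\quad\text{and}\quad \rho=\frac{C_H}{\Theta}(r-e^{-c_H})>0.$$ *)

theory Defs
  imports "HOL-Analysis.Analysis"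
begin

end

theory Submission
  imports Defs
begin

lemma r_facts:
  fixes c \<theta> :: real
  assumes c: "c > 0" and t0: "0 < \<theta>" and t1: "\<theta> < 1"
  defines "a \<equiv> exp (- c)"
  defines "r \<equiv> cosh c - 2 * sinh (c / 2) * sqrt ((cosh (c / 2))\<^sup>2 - \<theta>)"
  shows "a < r \<and> r < 1 \<and> (r - a) * (1 - a * r) = \<theta> * (1 - a)^2"
proof -
  define e where "e = exp (c/2)"
  have e1: "e > 1" unfolding e_def using c by simp
  have ec: "exp c = e^2" unfolding e_def by (simp add: power2_eq_square flip: exp_add)
  have emc: "exp (-c) = 1/e^2" using ec by (simp add: exp_minus field_simps)
  have emh: "exp (-(c/2)) = 1/e" unfolding e_def by (simp add: exp_minus field_simps)
  define ch where "ch = (e + 1/e)/2"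
  define sh where "sh = (e - 1/e)/2"
  have chd: "cosh (c/2) = ch" unfolding ch_def cosh_def e_def using emh e_def by simp
  have shd: "sinh (c/2) = sh" unfolding sh_def sinh_def e_def using emh e_def by simp
  have Cd: "cosh c = (e^2 + 1/e^2)/2" unfolding cosh_def using ec emc by simp
  have sh0: "sh > 0" unfolding sh_def using e1 by (simp add: field_simps less_1_mult)
  have ch0: "ch > 0" unfolding ch_def using e1 by (simp add: field_simps add_pos_nonneg)
  have chsh: "ch^2 - sh^2 = 1" unfolding ch_def sh_def using e1 by (simp add: field_simps power2_eq_square)
  define q where "q = sqrt (ch^2 - \<theta>)"
  have pos: "ch^2 - \<theta> > 0" using chsh t1 sh0 by (smt (verit) zero_le_power2)
  have q2: "q^2 = ch^2 - \<theta>" unfolding q_def using pos by (simp del: real_sqrt_le_iff)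
  have q0: "q \<ge> 0" unfolding q_def using pos by simp
  have rd: "r = (e^2 + 1/e^2)/2 - 2 * sh * q" unfolding r_def q_def using Cd chd shd by simp
  have ad: "a = 1/e^2" unfolding a_def using emc .
  have qch: "q < ch" using q2 q0 ch0 t0 by (smt (verit) power_mono)
  have qsh: "sh < q" using q2 q0 sh0 t1 chsh by (smt (verit) power_mono)
  have ra: "r - a = 2 * sh * (ch - q)"
    unfolding rd ad ch_def sh_def using e1 by (simp add: field_simps power2_eq_square)
  have r1: "1 - r = 2 * sh * (q - sh)"
    unfolding rd ad ch_def sh_def using e1 by (simp add: field_simps power2_eq_square)
  have "a < r" using ra sh0 qch by (smt (verit) mult_pos_pos)
  moreover have "r < 1" using r1 sh0 qsh by (smt (verit) mult_pos_pos)
  moreover have "(r - a) * (1 - a * r) = \<theta> * (1 - a)^2"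
  proof -
    have th: "\<theta> = ch^2 - q^2" using q2 by simp
    show ?thesis unfolding th rd ad ch_def sh_def using e1
      by (simp add: field_simps power2_eq_square)
  qed
  ultimately show ?thesis by blast
qed

lemma kern_lt: "k < j \<Longrightarrow> exp (- c * \<bar>real j - 1 - real k\<bar>) = exp (- c) ^ (j - Suc k)"
proof -
  assume "k < j"
  then have h: "\<bar>real j - 1 - real k\<bar> = real (j - Suc k)" by (simp add: of_nat_diff)
  have "exp (- c * \<bar>real j - 1 - real k\<bar>) = exp (real (j - Suc k) * (- c))"
    by (subst h) (simp only: mult.commute)
  also have "\<dots> = exp (- c) ^ (j - Suc k)" by (rule exp_of_nat_mult)
  finally show ?thesis .
qed

lemma kern_ge: "exp (- c * \<bar>real j - 1 - real (m + j)\<bar>) = exp (- c) ^ (Suc m)"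
proof -
  have h: "\<bar>real j - 1 - real (m + j)\<bar> = real (Suc m)" by simp
  have "exp (- c * \<bar>real j - 1 - real (m + j)\<bar>) = exp (real (Suc m) * (- c))"
    by (subst h) (simp only: mult.commute)
  also have "\<dots> = exp (- c) ^ (Suc m)" by (rule exp_of_nat_mult)
  finally show ?thesis .
qed

lemma kern_summable:
  fixes c :: real and w :: "nat \<Rightarrow> real"
  assumes c: "c > 0" and B: "\<And>k. \<bar>w k\<bar> \<le> B"
  shows "summable (\<lambda>k. exp (- c * \<bar>real j - 1 - real k\<bar>) * w k)"
proof -
  have g: "summable (\<lambda>m. B * exp (- c) ^ Suc m)"
    using c by (intro summable_mult summable_Suc_iff[THEN iffD2]) simp
  have "summable (\<lambda>m. exp (- c * \<bar>real j - 1 - real (m + j)\<bar>) * w (m + j))"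
  proof (rule summable_comparison_test'[OF g])
    fix m :: nat
    show "norm (exp (- c * \<bar>real j - 1 - real (m + j)\<bar>) * w (m + j)) \<le> B * exp (- c) ^ Suc m"
      unfolding kern_ge using B[of "m+j"] by (simp add: abs_mult mult.commute mult_left_mono)
  qed
  then show ?thesis using summable_iff_shift[of _ j] by blast
qed

lemma kern_sum:
  fixes a r :: real
  assumes c: "c > 0" and r0: "0 \<le> r" and r1: "r \<le> 1" and ra: "r \<noteq> exp (- c)"
  shows "(\<Sum>k. exp (- c * \<bar>real j - 1 - real k\<bar>) * r ^ k)
     = (r^j - exp (- c)^j) / (r - exp (- c)) + exp (- c) * r^j / (1 - exp (- c) * r)"
proof -
  define a where "a = exp (- c)"
  have a0: "0 < a" and a1: "a < 1" unfolding a_def using c by auto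
  have ar: "\<bar>a * r\<bar> < 1" using a0 a1 r0 r1
    by (simp add: abs_mult) (smt (verit) mult_left_le mult_nonneg_nonneg)
  have sm: "summable (\<lambda>k. exp (- c * \<bar>real j - 1 - real k\<bar>) * r ^ k)"
    by (rule kern_summable[OF c, of _ 1]) (use r0 r1 in \<open>simp add: power_le_one\<close>)
  have "(\<Sum>k. exp (- c * \<bar>real j - 1 - real k\<bar>) * r ^ k)
      = (\<Sum>m. exp (- c * \<bar>real j - 1 - real (m + j)\<bar>) * r ^ (m + j))
        + (\<Sum>k<j. exp (- c * \<bar>real j - 1 - real k\<bar>) * r ^ k)"
    by (rule suminf_split_initial_segment[OF sm])
  also have "(\<Sum>m. exp (- c * \<bar>real j - 1 - real (m + j)\<bar>) * r ^ (m + j))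
      = (\<Sum>m. (a * r^j) * (a * r) ^ m)"
    unfolding kern_ge a_def by (simp add: power_add power_mult_distrib mult_ac)
  also have "\<dots> = a * r^j / (1 - a * r)"
    using ar by (simp add: suminf_mult suminf_geometric)
  also have "(\<Sum>k<j. exp (- c * \<bar>real j - 1 - real k\<bar>) * r ^ k) = (\<Sum>k<j. a ^ (j - Suc k) * r ^ k)"
  proof (rule sum.cong[OF refl])
    fix k assume "k \<in> {..<j}"
    then show "exp (- c * \<bar>real j - 1 - real k\<bar>) * r ^ k = a ^ (j - Suc k) * r ^ k"
      by (subst kern_lt) (auto simp: a_def)
  qed
  also have "\<dots> = (r^j - a^j) / (r - a)"
    using power_diff_sumr2[of r j a] ra unfolding a_def by simp
  finally show ?thesis unfolding a_def by simp
qed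

theorem lemma3p5:
  fixes C_H c_H \<theta> :: real and y :: "nat \<Rightarrow> real"
  assumes "C_H > 0" and "c_H > 0" and "0 < \<theta>" and "\<theta> < 1"
    and "bounded (range y)"
    and "\<And>j. y j \<ge> 0"
    and "\<And>j. y j \<le> C_H * exp (- c_H * real j)
           + (\<theta> * (1 - exp (- c_H)) / (1 + exp (- c_H)))
             * (\<Sum>k. exp (- c_H * \<bar>real j - 1 - real k\<bar>) * y k)"
  shows "let \<Theta> = \<theta> * (1 - exp (- c_H)) / (1 + exp (- c_H));
             r = cosh c_H - 2 * sinh (c_H / 2) * sqrt ((cosh (c_H / 2))\<^sup>2 - \<theta>);
             \<rho> = C_H / \<Theta> * (r - exp (- c_H))
         in exp (- c_H) < r \<and> r < 1 \<and> \<rho> > 0 \<and> (\<forall>j. y j \<le> \<rho> * r ^ j)"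
proof -
  note C0 = assms(1) and c0 = assms(2) and t0 = assms(3) and t1 = assms(4)
  define a where "a = exp (- c_H)"
  define T where "T = \<theta> * (1 - a) / (1 + a)"
  define r where "r = cosh c_H - 2 * sinh (c_H / 2) * sqrt ((cosh (c_H / 2))\<^sup>2 - \<theta>)"
  define \<rho> where "\<rho> = C_H / T * (r - a)"
  define K where "K = (\<lambda>j k. exp (- c_H * \<bar>real j - 1 - real k\<bar>))"
  have a0: "0 < a" and a1: "a < 1" unfolding a_def using c0 by auto
  from r_facts[OF c0 t0 t1] have ar: "a < r" and r1: "r < 1" and eq: "(r - a) * (1 - a * r) = \<theta> * (1 - a)^2"
    unfolding a_def r_def by auto
  have r0: "0 < r" using a0 ar by simp
  have T0: "T > 0" unfolding T_def using a0 a1 t0 by simp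
  have rho0: "\<rho> > 0" unfolding \<rho>_def using C0 T0 ar by simp
  have ar1: "a * r < 1" using a0 a1 r0 r1 by (smt (verit) mult_less_cancel_left1)
  define z where "z = (\<lambda>j. \<rho> * r ^ j)"
  obtain B where B: "\<And>k. \<bar>y k\<bar> \<le> B" using assms(5) unfolding bounded_iff by auto
  have zb: "\<bar>z k\<bar> \<le> \<rho>" for k unfolding z_def using rho0 r0 r1
    by (simp add: abs_mult power_le_one mult_left_le)
  define d where "d = (\<lambda>k. y k - z k)"
  have db: "\<bar>d k\<bar> \<le> B + \<rho>" for k unfolding d_def using B[of k] zb[of k] by linarith
  have smy: "summable (\<lambda>k. K j k * y k)" for j unfolding K_def by (rule kern_summable[OF c0 B])
  have smz: "summable (\<lambda>k. K j k * z k)" for j unfolding K_def by (rule kern_summable[OF c0 zb])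
  have smd: "summable (\<lambda>k. K j k * d k)" for j unfolding K_def by (rule kern_summable[OF c0 db])
  have fixp: "C_H * a ^ j + T * (\<Sum>k. K j k * z k) = z j" for j
  proof -
    have "(\<Sum>k. K j k * z k) = \<rho> * (\<Sum>k. K j k * r ^ k)"
    proof -
      have smr: "summable (\<lambda>k. K j k * r ^ k)" unfolding K_def
        by (rule kern_summable[OF c0, of _ 1]) (use r0 r1 in \<open>simp add: power_le_one\<close>)
      show ?thesis unfolding z_def using suminf_mult[OF smr, of \<rho>] by (simp add: mult_ac)
    qed
    also have "(\<Sum>k. K j k * r ^ k) = (r^j - a^j) / (r - a) + a * r^j / (1 - a * r)"
      unfolding K_def a_def by (rule kern_sum[OF c0]) (use r0 r1 ar in \<open>auto simp: a_def\<close>)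
    finally have s: "(\<Sum>k. K j k * z k) = \<rho> * ((r^j - a^j) / (r - a) + a * r^j / (1 - a * r))" .
    have Trho: "T * \<rho> = C_H * (r - a)" unfolding \<rho>_def using T0 by simp
    have "C_H * a ^ j + T * (\<Sum>k. K j k * z k) = C_H * a^j + C_H * (r - a) * ((r^j - a^j) / (r - a) + a * r^j / (1 - a * r))"
      unfolding s using Trho by (simp add: mult.assoc[symmetric])
    also have "\<dots> = C_H * r^j + C_H * (r - a) * (a * r^j / (1 - a * r))"
    proof -
      have "C_H * (r - a) * ((r^j - a^j) / (r - a)) = C_H * (r^j - a^j)" using ar by simp
      then show ?thesis by (simp add: distrib_left algebra_simps)
    qed
    also have "\<dots> = C_H * r^j * ((1 - a * r) + (r - a) * a) / (1 - a * r)"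
      using ar1 by (simp add: field_simps)
    also have "\<dots> = C_H * r^j * (1 - a^2) / (1 - a * r)" by (simp add: algebra_simps power2_eq_square)
    also have "\<dots> = z j"
    proof -
      have "(1 - a^2) / (1 - a * r) = (r - a) / T"
      proof -
        have e2: "(1+a)*((r-a)*(1-a*r)) = (1+a)*(\<theta>*(1-a)^2)" using eq by simp
        have ne: "1 - a * r \<noteq> 0" "1 - a \<noteq> 0" "1 + a \<noteq> 0" using ar1 a0 a1 by auto
        have e3: "(r-a)*(1-a*r)*(1+a) = \<theta>*(1-a)^2*(1+a)" by (subst eq) (rule refl)
        have "(1 - a^2) * (\<theta> * (1 - a)) = \<theta>*(1-a)^2*(1+a)" by (simp add: power2_eq_square algebra_simps)
        also have "\<dots> = (r - a) * (1 + a) * (1 - a * r)" using e3 by (simp only: mult_ac)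
        finally have "(1 - a^2) * (\<theta> * (1 - a)) = (r - a) * (1 + a) * (1 - a * r)" .
        then show ?thesis unfolding T_def using ne t0
          by (simp add: divide_simps)
      qed
      then have "C_H * r^j * (1 - a^2) / (1 - a * r) = C_H * r^j * ((r - a) / T)"
        by (metis times_divide_eq_right)
      then show ?thesis unfolding z_def \<rho>_def by (simp add: mult_ac)
    qed
    finally show ?thesis .
  qed
  have dle: "d j \<le> T * (\<Sum>k. K j k * d k)" for j
  proof -
    have "(\<Sum>k. K j k * y k) = (\<Sum>k. K j k * z k) + (\<Sum>k. K j k * d k)"
      unfolding suminf_add[OF smz smd] by (simp add: d_def algebra_simps)
    then have "y j \<le> C_H * a ^ j + T * (\<Sum>k. K j k * z k) + T * (\<Sum>k. K j k * d k)"
      using assms(7)[of j] unfolding K_def T_def a_def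
      by (simp add: distrib_left mult.commute exp_of_nat_mult[symmetric])
    then show ?thesis unfolding fixp d_def by simp
  qed
  define M where "M = Sup (range d)"
  have bdd: "bdd_above (range d)" using db by (intro bdd_aboveI[of _ "B + \<rho>"]) (auto simp: abs_le_iff)
  have dM: "d j \<le> M" for j unfolding M_def using bdd by (simp add: cSUP_upper)
  have M0: "M \<le> 0"
  proof (rule ccontr)
    assume "\<not> M \<le> 0"
    then have Mp: "M > 0" by simp
    have "d j \<le> \<theta> * M" for j
    proof -
      have K1: "summable (\<lambda>k. K j k * 1)" unfolding K_def by (rule kern_summable[OF c0, of _ 1]) simp
      have "(\<Sum>k. K j k * d k) \<le> (\<Sum>k. K j k * M)"
      proof (rule suminf_le[OF _ smd])
        show "summable (\<lambda>k. K j k * M)" unfolding K_def by (rule kern_summable[OF c0, of "\<lambda>_. M" "\<bar>M\<bar>"]) simp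
        show "K j k * d k \<le> K j k * M" for k using dM[of k] unfolding K_def by (simp add: mult_left_mono)
      qed
      also have "\<dots> = M * (\<Sum>k. K j k * 1 ^ k)" using K1 suminf_mult[OF K1, of M] by (simp add: mult_ac)
      also have "(\<Sum>k. K j k * 1 ^ k) = (1^j - a^j) / (1 - a) + a * 1^j / (1 - a * 1)"
        unfolding K_def a_def by (rule kern_sum[OF c0]) (use a1 in \<open>auto simp: a_def\<close>)
      also have "\<dots> = (1 - a^j + a) / (1 - a)" by (simp add: add_divide_distrib)
      also have "\<dots> \<le> (1 + a) / (1 - a)" using a0 a1 by (intro divide_right_mono) auto
      finally have "(\<Sum>k. K j k * d k) \<le> M * ((1 + a) / (1 - a))" using Mp by simp
      then have "T * (\<Sum>k. K j k * d k) \<le> T * (M * ((1 + a) / (1 - a)))" using T0 by (intro mult_left_mono) auto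
      also have "\<dots> = \<theta> * M"
      proof -
        have "a * a < a * 1" using a0 a1 by (intro mult_strict_left_mono) auto
        then have "1 - a * a \<noteq> 0" "1 - a \<noteq> 0" "1 + a \<noteq> 0" using a0 a1 by linarith+
        then show ?thesis unfolding T_def by (simp add: field_simps)
      qed
      finally show ?thesis using dle[of j] by simp
    qed
    then have "M \<le> \<theta> * M" unfolding M_def by (intro cSup_least) auto
    moreover have "\<theta> * M < 1 * M" using Mp t1 by (intro mult_strict_right_mono) auto
    ultimately show False by simp
  qed
  have "\<forall>j. y j \<le> \<rho> * r ^ j"
  proof
    fix j show "y j \<le> \<rho> * r ^ j" using dM[of j] M0 unfolding d_def z_def by linarith
  qed
  then show ?thesis unfolding Let_def using ar r1 rho0 unfolding a_def T_def \<rho>_def r_def by simp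
qed
end
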